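(* Let $2\le m\le n$. If $u$ and $v$ are incomparable elements of the poset $(P_n\times P_2^m,\trianglelefteq)$, then $d_{H_{n,m}}(u,v)\le1+\binom{m}{2}$.
   Context: $P_k=\{0,\dots,k-1\}$, so $P_n\times P_2^m$ is the set of integer tuples $(v_0,\dots,v_m)$ with $0\le v_0\le n-1$ and $v_1,\dots,v_m\in\{0,1\}$. The dominance order $\trianglelefteq$ on $\mathbb{Z}^{m+1}$ is given by $(v_0,\dots,v_m)\trianglelefteq(u_0,\dots,u_m)$ iff $\sum_{j=0}^{i}v_j\le\sum_{j=0}^{i}u_j$ for every $0\le i\le m$; $P_n\times P_2^m$ carries the induced order. $H_{n,m}$ is the (undirected) Hasse diagram of $(P_n\times P_2^m,\trianglelefteq)$: $x,y$ are adjacent iff one covers the other. *)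

theory Defs
  imports "HOL-Library.Extended_Nat"
begin

text \<open>Elements of P_n x P_2^m are represented as lists (v_0,...,v_m) of naturals
  of length m+1, with v_0 < n and v_i < 2 for 1 <= i <= m.\<close>
definition grid :: "nat \<Rightarrow> nat \<Rightarrow> nat list set" where
  "grid n m = {v. length v = Suc m \<and> v ! 0 < n \<and> (\<forall>i\<in>{1..m}. v ! i < 2)}"

definition dom_le :: "nat list \<Rightarrow> nat list \<Rightarrow> bool" where
  "dom_le v u \<longleftrightarrow> length v = length u \<and>
     (\<forall>i < length v. sum_list (take (Suc i) v) \<le> sum_list (take (Suc i) u))"

definition dom_less :: "nat list \<Rightarrow> nat list \<Rightarrow> bool" where
  "dom_less v u \<longleftrightarrow> dom_le v u \<and> v \<noteq> u"

definition covers_in :: "nat list set \<Rightarrow> nat list \<Rightarrow> nat list \<Rightarrow> bool" where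
  "covers_in S y x \<longleftrightarrow> x \<in> S \<and> y \<in> S \<and> dom_less x y \<and>
     \<not> (\<exists>z\<in>S. dom_less x z \<and> dom_less z y)"

definition hasse_adj :: "nat \<Rightarrow> nat \<Rightarrow> nat list \<Rightarrow> nat list \<Rightarrow> bool" where
  "hasse_adj n m x y \<longleftrightarrow> covers_in (grid n m) x y \<or> covers_in (grid n m) y x"

text \<open>A walk from x to y in H_{n,m} given as its list of vertices;
  its length (number of edges) is length - 1.\<close>
definition hasse_walk :: "nat \<Rightarrow> nat \<Rightarrow> nat list list \<Rightarrow> nat list \<Rightarrow> nat list \<Rightarrow> bool" where
  "hasse_walk n m ws x y \<longleftrightarrow> ws \<noteq> [] \<and> hd ws = x \<and> last ws = y \<and> set ws \<subseteq> grid n m \<and>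
     (\<forall>i. Suc i < length ws \<longrightarrow> hasse_adj n m (ws ! i) (ws ! Suc i))"

text \<open>Graph distance (infinite if no walk exists).\<close>
definition hasse_dist :: "nat \<Rightarrow> nat \<Rightarrow> nat list \<Rightarrow> nat list \<Rightarrow> enat" where
  "hasse_dist n m x y = (INF ws \<in> {ws. hasse_walk n m ws x y}. enat (length ws - 1))"

end

theory Submission
  imports Defs
begin

definition ps :: "nat list \<Rightarrow> nat \<Rightarrow> nat" where
  "ps x i = sum_list (take (Suc i) x)"

lemma ps_0: "x \<noteq> [] \<Longrightarrow> ps x 0 = x!0"
  by (cases x) (auto simp: ps_def)

lemma ps_Suc: "Suc i < length x \<Longrightarrow> ps x (Suc i) = ps x i + x!(Suc i)"
  by (simp add: ps_def take_Suc_conv_app_nth)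

lemma ps_inj:
  assumes "length a = length b" "\<forall>i<length a. ps a i = ps b i"
  shows "a = b"
proof (rule nth_equalityI)
  show "length a = length b" by fact
  fix i assume i: "i < length a"
  show "a!i = b!i"
  proof (cases i)
    case 0
    then show ?thesis using i assms ps_0[of a] ps_0[of b] by force
  next
    case (Suc j)
    then show ?thesis using i assms ps_Suc[of j a] ps_Suc[of j b] by force
  qed
qed

lemma gridD: "x \<in> grid n m \<Longrightarrow> length x = Suc m \<and> x!0 < n \<and> (\<forall>i. 1 \<le> i \<longrightarrow> i \<le> m \<longrightarrow> x!i < 2)"
  by (auto simp: grid_def)

lemma dom_le_ps: "dom_le x y \<longleftrightarrow> length x = length y \<and> (\<forall>i<length x. ps x i \<le> ps y i)"
  by (simp add: dom_le_def ps_def)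

definition mv :: "nat list \<Rightarrow> nat \<Rightarrow> nat list" where
  "mv x k = x[k := x!k - 1, Suc k := x!(Suc k) + 1]"

lemma mv_len[simp]: "length (mv x k) = length x"
  by (simp add: mv_def)

lemma mv_nth: "length x = Suc m \<Longrightarrow> k \<le> m \<Longrightarrow> j \<le> m \<Longrightarrow>
  mv x k ! j = (if j = k then x!k - 1 else if j = Suc k then x!j + 1 else x!j)"
  by (auto simp: mv_def nth_list_update)

lemma ps_mv:
  assumes "length x = Suc m" "k \<le> m" "1 \<le> x!k"
  shows "i \<le> m \<Longrightarrow> int (ps (mv x k) i) = int (ps x i) - (if i = k then 1 else 0)"
proof (induction i)
  case 0
  have n1: "x \<noteq> []" using assms by auto
  have n2: "mv x k \<noteq> []" using assms(1) by (metis mv_len length_0_conv nat.simps(3))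
  show ?case using ps_0[OF n1] ps_0[OF n2] mv_nth[OF assms(1,2), of 0] assms(3)
    by auto
next
  case (Suc i)
  have l: "Suc i < length x" "Suc i < length (mv x k)" using Suc.prems assms by auto
  have IH: "int (ps (mv x k) i) = int (ps x i) - (if i = k then 1 else 0)" using Suc by auto
  show ?case using ps_Suc[OF l(1)] ps_Suc[OF l(2)] IH mv_nth[OF assms(1,2) Suc.prems] assms(3)
    by auto
qed

definition Ld :: "nat \<Rightarrow> nat list \<Rightarrow> nat list \<Rightarrow> nat" where
  "Ld m x y = (\<Sum>i\<le>m. nat \<bar>int (ps x i) - int (ps y i)\<bar>)"

lemma Ld_sym: "Ld m x y = Ld m y x"
  by (simp add: Ld_def abs_minus_commute)

lemma down_move:
  assumes m: "1 \<le> m" and x: "x \<in> grid n m" and y: "y \<in> grid n m"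
    and i: "i \<le> m" "ps y i < ps x i"
  shows "\<exists>k\<le>m. mv x k \<in> grid n m \<and> covers_in (grid n m) x (mv x k) \<and> Ld m x y = Suc (Ld m (mv x k) y)"
proof -
  have xl: "length x = Suc m" and x0: "x!0 < n" and xb: "\<And>j. 1 \<le> j \<Longrightarrow> j \<le> m \<Longrightarrow> x!j < 2"
    using gridD[OF x] by auto
  have yl: "length y = Suc m" and yb: "\<And>j. 1 \<le> j \<Longrightarrow> j \<le> m \<Longrightarrow> y!j < 2"
    using gridD[OF y] by auto
  define S where "S = {k. k \<le> m \<and> ps y k < ps x k \<and> (k = 0 \<or> 1 \<le> x!k)}"
  have finS: "finite S" unfolding S_def by (rule finite_subset[of _ "{..m}"]) auto
  define i0 where "i0 = (LEAST i. ps y i < ps x i)"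
  have i0: "ps y i0 < ps x i0" unfolding i0_def by (rule LeastI[of _ i]) (rule i(2))
  have i0le: "i0 \<le> i" unfolding i0_def by (rule Least_le) (rule i(2))
  have "i0 \<in> S"
  proof (cases i0)
    case 0 then show ?thesis using i0 i0le i by (auto simp: S_def)
  next
    case (Suc j)
    have "\<not> ps y j < ps x j" using Suc unfolding i0_def
      by (metis Suc i0_def lessI not_less_Least)
    moreover have "ps x i0 = ps x j + x!i0" "ps y i0 = ps y j + y!i0"
      using ps_Suc[of j x] ps_Suc[of j y] Suc i0le i xl yl by auto
    ultimately show ?thesis using i0 i0le i by (auto simp: S_def)
  qed
  then have Sne: "S \<noteq> {}" by auto
  define k where "k = Max S"
  have kS: "k \<in> S" unfolding k_def using finS Sne by (rule Max_in)
  have kmax: "\<And>k'. k' \<in> S \<Longrightarrow> k' \<le> k" unfolding k_def using finS by auto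
  have km: "k \<le> m" and kgt: "ps y k < ps x k" using kS by (auto simp: S_def)
  have xk1: "1 \<le> x!k"
  proof (cases "k = 0")
    case True
    have "x \<noteq> []" using xl by auto
    then show ?thesis using True kgt ps_0[of x] by auto
  next
    case False then show ?thesis using kS by (auto simp: S_def)
  qed
  have xk2: "k \<noteq> 0 \<Longrightarrow> x!k \<le> 1" using xb[of k] km by auto
  have hSuc: "k < m \<Longrightarrow> x!(Suc k) = 0"
  proof (rule ccontr)
    assume km': "k < m" and ne: "x!(Suc k) \<noteq> 0"
    then have "x!(Suc k) = 1" using xb[of "Suc k"] by auto
    moreover have "y!(Suc k) \<le> 1" using yb[of "Suc k"] km' by auto
    moreover have "ps x (Suc k) = ps x k + x!(Suc k)" "ps y (Suc k) = ps y k + y!(Suc k)"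
      using ps_Suc[of k x] ps_Suc[of k y] km' xl yl by auto
    ultimately have "Suc k \<in> S" using kgt km' by (auto simp: S_def)
    then show False using kmax by fastforce
  qed
  define x' where "x' = mv x k"
  have x'l: "length x' = Suc m" using xl by (simp add: x'_def)
  have psx': "\<And>j. j \<le> m \<Longrightarrow> int (ps x' j) = int (ps x j) - (if j = k then 1 else 0)"
    unfolding x'_def using ps_mv[OF xl km xk1] by auto
  have x'g: "x' \<in> grid n m"
  proof -
    have "x'!0 < n" using mv_nth[OF xl km, of 0] x0 by (auto simp: x'_def)
    moreover have "\<forall>j\<in>{1..m}. x'!j < 2"
    proof
      fix j assume j: "j \<in> {1..m}"
      show "x'!j < 2" using mv_nth[OF xl km, of j] j xb[of j] hSuc xk1 xk2
        by (auto simp: x'_def)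
    qed
    ultimately show ?thesis using x'l by (auto simp: grid_def)
  qed
  have eqx: "z = x" if "length z = Suc m" "\<And>j. j \<le> m \<Longrightarrow> ps z j = ps x j" for z
    using ps_inj[of z x] that xl by auto
  have eqx': "z = x'" if "length z = Suc m" "\<And>j. j \<le> m \<Longrightarrow> ps z j = ps x' j" for z
    using ps_inj[of z x'] that x'l by auto
  have less: "dom_less x' x"
  proof -
    have "\<forall>j<length x'. ps x' j \<le> ps x j"
    proof (intro allI impI)
      fix j assume "j < length x'"
      then have "j \<le> m" using x'l by auto
      from psx'[OF this] show "ps x' j \<le> ps x j" by (cases "j = k") auto
    qed
    then have "dom_le x' x" unfolding dom_le_ps using x'l xl by simp
    moreover have "x' \<noteq> x" using psx'[of k] km by auto
    ultimately show ?thesis by (simp add: dom_less_def)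
  qed
  have nz: "\<not> (\<exists>z\<in>grid n m. dom_less x' z \<and> dom_less z x)"
  proof
    assume "\<exists>z\<in>grid n m. dom_less x' z \<and> dom_less z x"
    then obtain z where z: "z \<in> grid n m" "dom_le x' z" "dom_le z x" "z \<noteq> x" "z \<noteq> x'"
      by (auto simp: dom_less_def)
    have zl: "length z = Suc m" using gridD[OF z(1)] by auto
    have lo: "\<And>j. j \<le> m \<Longrightarrow> ps x' j \<le> ps z j" using z(2) x'l unfolding dom_le_ps by auto
    have hi: "\<And>j. j \<le> m \<Longrightarrow> ps z j \<le> ps x j" using z(3) zl unfolding dom_le_ps by auto
    show False
    proof (cases "ps z k = ps x k")
      case True
      have "\<And>j. j \<le> m \<Longrightarrow> ps z j = ps x j"
      proof -
        fix j assume j: "j \<le> m"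
        show "ps z j = ps x j"
          using lo[OF j] hi[OF j] psx'[OF j] True by (cases "j = k") auto
      qed
      then show False using eqx zl z(4) by auto
    next
      case False
      have "\<And>j. j \<le> m \<Longrightarrow> ps z j = ps x' j"
      proof -
        fix j assume j: "j \<le> m"
        show "ps z j = ps x' j"
          using lo[OF j] hi[OF j] psx'[OF j] False by (cases "j = k") auto
      qed
      then show False using eqx' zl z(5) by auto
    qed
  qed
  have cov: "covers_in (grid n m) x x'"
    using x x'g less nz by (simp add: covers_in_def)
  have Ldeq: "Ld m x y = Suc (Ld m x' y)"
  proof -
    let ?f = "\<lambda>x i. nat \<bar>int (ps x i) - int (ps y i)\<bar>"
    have "Ld m x y = ?f x k + sum (?f x) ({..m} - {k})"
      unfolding Ld_def using km by (subst sum.remove[of _ k]) auto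
    moreover have "Ld m x' y = ?f x' k + sum (?f x') ({..m} - {k})"
      unfolding Ld_def using km by (subst sum.remove[of _ k]) auto
    moreover have "sum (?f x) ({..m} - {k}) = sum (?f x') ({..m} - {k})"
      by (rule sum.cong) (auto simp: psx')
    moreover have "?f x k = Suc (?f x' k)" using psx'[OF km] kgt by auto
    ultimately show ?thesis by simp
  qed
  show ?thesis using km x'g cov Ldeq unfolding x'_def by blast
qed



lemma walk_cons:
  assumes "hasse_walk n m ws x' y" "hasse_adj n m x x'" "x \<in> grid n m"
  shows "hasse_walk n m (x # ws) x y"
  unfolding hasse_walk_def
proof (intro conjI allI impI)
  show "x # ws \<noteq> []" "hd (x # ws) = x" by auto
  show "last (x # ws) = y" "set (x # ws) \<subseteq> grid n m"
    using assms by (auto simp: hasse_walk_def)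
  fix i assume i: "Suc i < length (x # ws)"
  show "hasse_adj n m ((x # ws) ! i) ((x # ws) ! Suc i)"
  proof (cases i)
    case 0
    then show ?thesis using assms(1,2) by (cases ws) (auto simp: hasse_walk_def)
  next
    case (Suc j)
    then show ?thesis using assms(1) i by (auto simp: hasse_walk_def)
  qed
qed

lemma walk_snoc:
  assumes "hasse_walk n m ws x y'" "hasse_adj n m y' y" "y \<in> grid n m"
  shows "hasse_walk n m (ws @ [y]) x y"
  unfolding hasse_walk_def
proof (intro conjI allI impI)
  show "ws @ [y] \<noteq> []" "last (ws @ [y]) = y" by auto
  show "hd (ws @ [y]) = x" "set (ws @ [y]) \<subseteq> grid n m"
    using assms by (auto simp: hasse_walk_def)
  fix i assume i: "Suc i < length (ws @ [y])"
  have ne: "ws \<noteq> []" using assms(1) by (simp add: hasse_walk_def)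
  show "hasse_adj n m ((ws @ [y]) ! i) ((ws @ [y]) ! Suc i)"
  proof (cases "Suc i < length ws")
    case True
    then show ?thesis using assms(1) by (auto simp: hasse_walk_def nth_append)
  next
    case False
    then have "Suc i = length ws" using i by auto
    moreover have "ws ! i = last ws" using ne \<open>Suc i = length ws\<close> by (metis last_conv_nth diff_Suc_1)
    ultimately show ?thesis using assms(1,2) by (auto simp: hasse_walk_def nth_append)
  qed
qed

lemma walk_exists:
  assumes "1 \<le> m"
  shows "x \<in> grid n m \<Longrightarrow> y \<in> grid n m \<Longrightarrow> Ld m x y = k \<Longrightarrow>
    \<exists>ws. hasse_walk n m ws x y \<and> length ws = Suc k"
proof (induction k arbitrary: x y)
  case 0
  have xl: "length x = Suc m" and yl: "length y = Suc m" using gridD 0 by auto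
  have "\<forall>i\<le>m. nat \<bar>int (ps x i) - int (ps y i)\<bar> = 0"
    using 0(3) unfolding Ld_def by (simp add: sum_eq_0_iff)
  then have "\<forall>i<length x. ps x i = ps y i" using xl by auto
  then have "x = y" using ps_inj xl yl by auto
  then show ?case using 0 by (intro exI[of _ "[x]"]) (auto simp: hasse_walk_def)
next
  case (Suc k)
  have xl: "length x = Suc m" and yl: "length y = Suc m" using gridD Suc.prems by auto
  show ?case
  proof (cases "\<exists>i\<le>m. ps y i < ps x i")
    case True
    then obtain i where i: "i \<le> m" "ps y i < ps x i" by auto
    obtain k' where k': "mv x k' \<in> grid n m" "covers_in (grid n m) x (mv x k')"
      "Ld m x y = Suc (Ld m (mv x k') y)"
      using down_move[OF assms Suc.prems(1,2) i] by auto
    obtain ws where ws: "hasse_walk n m ws (mv x k') y" "length ws = Suc k"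
      using Suc.IH[OF k'(1) Suc.prems(2)] k'(3) Suc.prems(3) by auto
    have "hasse_adj n m x (mv x k')" using k'(2) by (simp add: hasse_adj_def)
    then show ?thesis using walk_cons[OF ws(1) _ Suc.prems(1)] ws(2) by fastforce
  next
    case False
    have "x \<noteq> y" using Suc.prems(3) unfolding Ld_def by auto
    have "\<not> (\<forall>i<length x. ps x i = ps y i)"
    proof
      assume "\<forall>i<length x. ps x i = ps y i"
      then have "x = y" using ps_inj[of x y] xl yl by auto
      then show False using \<open>x \<noteq> y\<close> by auto
    qed
    then obtain i where i: "i \<le> m" "ps x i < ps y i" using False xl
      by (metis less_Suc_eq_le nat_neq_iff)
    obtain k' where k': "mv y k' \<in> grid n m" "covers_in (grid n m) y (mv y k')"
      "Ld m y x = Suc (Ld m (mv y k') x)"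
      using down_move[OF assms Suc.prems(2,1) i] by auto
    have s1: "Ld m x (mv y k') = Ld m (mv y k') x" by (rule Ld_sym)
    have s2: "Ld m x y = Ld m y x" by (rule Ld_sym)
    have "Ld m x (mv y k') = k" using k'(3) Suc.prems(3) unfolding s1 s2 by simp
    then obtain ws where ws: "hasse_walk n m ws x (mv y k')" "length ws = Suc k"
      using Suc.IH[OF Suc.prems(1) k'(1)] by auto
    have "hasse_adj n m (mv y k') y" using k'(2) by (simp add: hasse_adj_def)
    then show ?thesis using walk_snoc[OF ws(1) _ Suc.prems(2)] ws(2) by fastforce
  qed
qed

lemma ivt:
  fixes f :: "nat \<Rightarrow> int"
  assumes st: "\<And>i. i < q \<Longrightarrow> \<bar>f (Suc i) - f i\<bar> \<le> 1"
  shows "p < q \<Longrightarrow> f p > 0 \<Longrightarrow> f q < 0 \<Longrightarrow> \<exists>z. p < z \<and> z < q \<and> f z = 0"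
  using st
proof (induction q)
  case 0 then show ?case by auto
next
  case (Suc q)
  show ?case
  proof (cases "q = p")
    case True
    then show ?thesis using Suc.prems(1-3) Suc.prems(4)[of q] by auto
  next
    case False
    then have pq: "p < q" using Suc.prems by auto
    consider "f q = 0" | "f q < 0" | "f q > 0" by linarith
    then show ?thesis
    proof cases
      case 1 then show ?thesis using pq by auto
    next
      case 2
      then obtain z where "p < z" "z < q" "f z = 0" using Suc.IH[OF pq Suc.prems(2)] Suc.prems(4) by auto
      then show ?thesis by auto
    next
      case 3
      then show ?thesis using Suc.prems(3) Suc.prems(4)[of q] by auto
    qed
  qed
qed

lemma lip1:
  fixes f :: "nat \<Rightarrow> int"
  assumes st: "\<And>i. i < q \<Longrightarrow> \<bar>f (Suc i) - f i\<bar> \<le> 1"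
  shows "j \<le> i \<Longrightarrow> i \<le> q \<Longrightarrow> \<bar>f i - f j\<bar> \<le> int (i - j)"
proof (induction i)
  case 0 then show ?case by auto
next
  case (Suc i)
  show ?case
  proof (cases "j = Suc i")
    case True then show ?thesis by auto
  next
    case False
    then have "j \<le> i" using Suc by auto
    then have "\<bar>f i - f j\<bar> \<le> int (i - j)" using Suc by auto
    moreover have "\<bar>f (Suc i) - f i\<bar> \<le> 1" using st Suc by auto
    ultimately show ?thesis using \<open>j \<le> i\<close> by (simp add: Suc_diff_le)
  qed
qed

lemma lip:
  fixes f :: "nat \<Rightarrow> int"
  assumes st: "\<And>i. i < q \<Longrightarrow> \<bar>f (Suc i) - f i\<bar> \<le> 1"
    and "i \<le> q" "j \<le> q"
  shows "\<bar>f i - f j\<bar> \<le> \<bar>int i - int j\<bar>"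
proof (cases "j \<le> i")
  case True then show ?thesis using lip1[where q=q and f=f and j=j and i=i, OF st True assms(2)] by auto
next
  case False then show ?thesis using lip1[where q=q and f=f and j=i and i=j, OF st] assms(3) by (auto simp: abs_minus_commute)
qed

lemma gsum: "2 * (\<Sum>i\<le>z. z - i) = z * (z + 1::nat)"
proof (induction z)
  case 0 then show ?case by simp
next
  case (Suc z)
  have "(\<Sum>i\<le>Suc z. Suc z - i) = (\<Sum>i\<le>z. Suc z - i)" by (simp add: sum.atMost_Suc)
  also have "\<dots> = (\<Sum>i\<le>z. (z - i) + 1)" by (rule sum.cong) (auto simp: Suc_diff_le)
  also have "\<dots> = (\<Sum>i\<le>z. z - i) + (\<Sum>i\<le>z. (1::nat))" by (rule sum.distrib)
  also have "\<dots> = (\<Sum>i\<le>z. z - i) + (z + 1)" by simp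
  finally show ?case using Suc by (simp add: algebra_simps)
qed

lemma csum: "z \<le> m \<Longrightarrow> 2 * (\<Sum>i\<le>m. nat \<bar>int i - int z\<bar>) = z*(z+1) + (m-z)*(m-z+1)"
proof (induction m)
  case 0 then show ?case by simp
next
  case (Suc m)
  show ?case
  proof (cases "z = Suc m")
    case True
    have "(\<Sum>i\<le>Suc m. nat \<bar>int i - int z\<bar>) = (\<Sum>i\<le>z. z - i)"
      using True by (intro sum.cong) auto
    then show ?thesis using gsum[of z] True by simp
  next
    case False
    then have zm: "z \<le> m" using Suc by auto
    obtain w where w: "m = z + w" using zm le_Suc_ex by blast
    have "2 * (\<Sum>i\<le>Suc m. nat \<bar>int i - int z\<bar>) = 2 * (\<Sum>i\<le>m. nat \<bar>int i - int z\<bar>) + 2 * (Suc m - z)"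
      using zm by (simp add: sum.atMost_Suc algebra_simps)
    then show ?thesis using Suc.IH[OF zm] w by (simp add: algebra_simps)
  qed
qed

lemma two_choose: "2 * (m choose 2) = m * (m - 1)"
proof -
  have "even (m * (m - 1))" by (induction m) auto
  then show ?thesis unfolding choose_two by simp
qed

lemma arith_aux: "(z::nat) = Suc a \<Longrightarrow> m = z + Suc b \<Longrightarrow> z*(z+1) + (m-z)*(m-z+1) \<le> 2 + m * (m - 1)"
  by (simp add: algebra_simps)

lemma half_aux: "2 * (s::nat) = x \<Longrightarrow> x \<le> 2 + y \<Longrightarrow> 2 * c = y \<Longrightarrow> s \<le> 1 + c"
  by linarith

lemma sum_bound:
  assumes "1 \<le> z" "z < m"
  shows "(\<Sum>i\<le>m. nat \<bar>int i - int z\<bar>) \<le> 1 + (m choose 2)"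
proof -
  obtain a where a: "z = Suc a" using assms(1) not0_implies_Suc by fastforce
  obtain b0 where "m = Suc (z + b0)" using less_imp_Suc_add[OF assms(2)] by blast
  then have b: "m = z + Suc b0" by simp
  show ?thesis
    by (rule half_aux[OF csum[of z m] arith_aux[OF a b] two_choose[of m]]) (use assms in auto)
qed

theorem lemma5p6:
  fixes n m :: nat and u v :: "nat list"
  assumes "2 \<le> m" and "m \<le> n"
    and "u \<in> grid n m" and "v \<in> grid n m"
    and "\<not> dom_le u v" and "\<not> dom_le v u"
  shows "hasse_dist n m u v \<le> enat (1 + (m choose 2))"
proof -
  have ul: "length u = Suc m" and ub: "\<And>j. 1 \<le> j \<Longrightarrow> j \<le> m \<Longrightarrow> u!j < 2"
    using gridD[OF assms(3)] by auto
  have vl: "length v = Suc m" and vb: "\<And>j. 1 \<le> j \<Longrightarrow> j \<le> m \<Longrightarrow> v!j < 2"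
    using gridD[OF assms(4)] by auto
  obtain i where i: "i \<le> m" "ps v i < ps u i"
    using assms(5) ul vl unfolding dom_le_ps by (auto simp: not_le less_Suc_eq_le)
  obtain j where j: "j \<le> m" "ps u j < ps v j"
    using assms(6) ul vl unfolding dom_le_ps by (auto simp: not_le less_Suc_eq_le)
  define D where "D = (\<lambda>i. int (ps u i) - int (ps v i))"
  have st: "\<bar>D (Suc k) - D k\<bar> \<le> 1" if "k < m" for k
  proof -
    have "D (Suc k) - D k = int (u!Suc k) - int (v!Suc k)"
      using ps_Suc[of k u] ps_Suc[of k v] ul vl that by (simp add: D_def)
    moreover have "u!Suc k < 2" "v!Suc k < 2" using ub vb that by auto
    ultimately show ?thesis by auto
  qed
  obtain z where z: "0 < z" "z < m" "D z = 0"
  proof (cases "i < j")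
    case True
    have stj: "\<bar>D (Suc k) - D k\<bar> \<le> 1" if "k < j" for k
      using st[of k] that j by auto
    have "0 < D i" "D j < 0" using i j by (auto simp: D_def)
    then obtain z where "i < z" "z < j" "D z = 0"
      using ivt[where q=j and f=D and p=i, OF stj True] by blast
    then show ?thesis using j by (intro that[of z]) auto
  next
    case False
    then have ji: "j < i" using i j by (cases "i = j") auto
    define E where "E = (\<lambda>k. - D k)"
    have sti: "\<bar>E (Suc k) - E k\<bar> \<le> 1" if "k < i" for k
    proof -
      have "E (Suc k) - E k = - (D (Suc k) - D k)" by (simp add: E_def)
      then have "\<bar>E (Suc k) - E k\<bar> = \<bar>D (Suc k) - D k\<bar>" by (simp only: abs_minus_cancel)
      then show ?thesis using st[of k] that i by auto
    qed
    have "0 < E j" "E i < 0" using i j by (auto simp: D_def E_def)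
    then obtain z where "j < z" "z < i" "E z = 0"
      using ivt[where q=i and f=E and p=j, OF sti ji] by blast
    then show ?thesis using i by (intro that[of z]) (auto simp: E_def)
  qed
  have "Ld m u v = (\<Sum>i\<le>m. nat \<bar>D i\<bar>)" by (simp add: Ld_def D_def)
  also have "\<dots> \<le> (\<Sum>i\<le>m. nat \<bar>int i - int z\<bar>)"
  proof (rule sum_mono)
    fix k assume "k \<in> {..m}"
    then have "\<bar>D k - D z\<bar> \<le> \<bar>int k - int z\<bar>" using lip[where q=m and f=D and i=k and j=z, OF st] z by auto
    then show "nat \<bar>D k\<bar> \<le> nat \<bar>int k - int z\<bar>" using z by auto
  qed
  also have "\<dots> \<le> 1 + (m choose 2)" using sum_bound z by auto
  finally have Lb: "Ld m u v \<le> 1 + (m choose 2)" .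
  obtain ws where ws: "hasse_walk n m ws u v" "length ws = Suc (Ld m u v)"
    using walk_exists[where m=m and n=n and x=u and y=v and k="Ld m u v"] assms by auto
  have "hasse_dist n m u v \<le> enat (length ws - 1)"
    unfolding hasse_dist_def by (rule INF_lower) (use ws in auto)
  also have "\<dots> \<le> enat (1 + (m choose 2))" using ws Lb by simp
  finally show ?thesis .
qed

end
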